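(* Let $p\ge 1$, $\varepsilon>0$ and integers $k,l\ge 1$. There exists an integer $N\ge 1$ such that for every linear subspace $F$ of $\ell_p^N$ with $\dim F\ge N-k$, there exist $l$ vectors $y_1,\dots,y_l\in\ell_p^N$ of norm one, with pairwise disjoint supports, such that $\operatorname{dist}(y_j,F)\le\varepsilon$ for $1\le j\le l$.
   Context: $\ell_p^N$ is $\mathbb{R}^N$ with the norm $\|x\|_p=(\sum_{i=1}^N|x_i|^p)^{1/p}$; the support of $x$ is $\{i: x_i\neq 0\}$; distances are measured in $\|\cdot\|_p$. *)

theory Defs
  imports "HOL-Analysis.Analysis" "HOL-Library.Function_Algebras"
begin

text \<open>Vectors of \<open>\<real>^N\<close> are represented as functions \<open>nat \<Rightarrow> real\<close> vanishing at all
  indices \<open>\<ge> N\<close>; coordinates are indexed by \<open>{..<N}\<close>.\<close>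

definition vecs :: "nat \<Rightarrow> (nat \<Rightarrow> real) set" where
  "vecs N = {x. \<forall>i\<ge>N. x i = 0}"

definition fscale :: "real \<Rightarrow> (nat \<Rightarrow> real) \<Rightarrow> (nat \<Rightarrow> real)" where
  "fscale c x = (\<lambda>i. c * x i)"

definition lp_norm :: "real \<Rightarrow> nat \<Rightarrow> (nat \<Rightarrow> real) \<Rightarrow> real" where
  "lp_norm p N x = (\<Sum>i<N. \<bar>x i\<bar> powr p) powr (1 / p)"

definition supp :: "nat \<Rightarrow> (nat \<Rightarrow> real) \<Rightarrow> nat set" where
  "supp N x = {i. i < N \<and> x i \<noteq> 0}"

definition lp_dist :: "real \<Rightarrow> nat \<Rightarrow> (nat \<Rightarrow> real) \<Rightarrow> (nat \<Rightarrow> real) set \<Rightarrow> real" where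
  "lp_dist p N y F = (INF z\<in>F. lp_norm p N (y - z))"

lemma vector_space_fscale: "vector_space fscale"
  unfolding fscale_def by unfold_locales (auto simp: algebra_simps fun_eq_iff)

end

theory Submission imports Defs begin

lemma sum_fun_apply': "(sum f S) (i::nat) = (\<Sum>v\<in>S. (f v i::real))"
  by (induction S rule: infinite_finite_induct) auto

definition ev :: "nat \<Rightarrow> nat \<Rightarrow> real" where "ev i = (\<lambda>j. if j = i then 1 else 0)"

lemma ev_sum: "(\<Sum>i\<in>S. fscale (c i) (ev i)) j = (if j \<in> S then c j else 0)" if "finite S"
proof -
  have "(\<Sum>i\<in>S. fscale (c i) (ev i)) j = (\<Sum>i\<in>S. if i = j then c i else 0)"
    unfolding sum_fun_apply' by (intro sum.cong) (auto simp: fscale_def ev_def)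
  also have "\<dots> = (if j \<in> S then c j else 0)" using that by (simp add: sum.delta)
  finally show ?thesis .
qed

lemma vecs_span: "vecs N \<subseteq> module.span fscale (ev ` {..<N})"
proof
  interpret vs: vector_space fscale by (rule vector_space_fscale)
  fix x assume x: "x \<in> vecs N"
  have "x = (\<Sum>i<N. fscale (x i) (ev i))"
  proof
    fix j
    show "x j = (\<Sum>i<N. fscale (x i) (ev i)) j"
      unfolding ev_sum[OF finite_lessThan] using x by (auto simp: vecs_def)
  qed
  also have "\<dots> \<in> vs.span (ev ` {..<N})"
    by (intro vs.span_sum vs.span_scale vs.span_base) auto
  finally show "x \<in> vs.span (ev ` {..<N})" .
qed

lemma injev: "inj ev"
proof
  fix a b assume "ev a = ev b"
  then have "ev a a = ev b a" by simp
  then show "a = b" by (simp add: ev_def split: if_splits)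
qed

lemma key:
  assumes FN: "F \<subseteq> vecs N" and sF: "module.subspace fscale F" and BN: "B \<subseteq> {..<N}"
    and D: "N < vector_space.dim fscale F + card B"
  shows "\<exists>x\<in>F. x \<noteq> 0 \<and> (\<forall>i. i \<notin> B \<longrightarrow> x i = 0)"
proof (rule ccontr)
  interpret vs: vector_space fscale by (rule vector_space_fscale)
  assume H0: "\<not> ?thesis"
  have H: "x = 0" if "x \<in> F" "\<And>i. i \<notin> B \<Longrightarrow> x i = 0" for x
    using H0 that by blast
  obtain A where A1: "A \<subseteq> F" "vs.independent A" "F \<subseteq> vs.span A" "card A = vs.dim F"
    by (rule vs.basis_exists)
  have A: "A \<subseteq> F" "F \<subseteq> vs.span A" "vs.independent A" "card A = vs.dim F" using A1 by auto
  have finB: "finite B" using BN finite_subset by blast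
  have Asp: "A \<subseteq> vs.span (ev ` {..<N})" using A(1) FN vecs_span by blast
  have finA: "finite A"
    using vs.independent_span_bound[OF _ A(3) Asp] by simp
  have evF: "ev i \<notin> F" if "i \<in> B" for i
  proof
    assume "ev i \<in> F"
    then have "ev i = 0" by (rule H) (auto simp: ev_def that)
    then have "ev i i = 0" by simp
    then show False by (simp add: ev_def)
  qed
  have disj: "A \<inter> ev ` B = {}" using evF A(1) by blast
  have spanAF: "vs.span A \<subseteq> F" using A(1) sF vs.span_minimal by blast
  have ind: "vs.independent (A \<union> ev ` B)"
  proof (rule vs.independent_if_scalars_zero)
    show "finite (A \<union> ev ` B)" using finA finB by simp
    fix c v assume S: "(\<Sum>x\<in>A \<union> ev ` B. fscale (c x) x) = 0" and v: "v \<in> A \<union> ev ` B"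
    define a where "a = (\<Sum>x\<in>A. fscale (c x) x)"
    define b where "b = (\<Sum>x\<in>ev ` B. fscale (c x) x)"
    have S2: "a + b = 0"
      unfolding a_def b_def using S sum.union_disjoint[OF finA _ disj, of "\<lambda>x. fscale (c x) x"] finB
      by simp
    have bB: "b = (\<Sum>i\<in>B. fscale (c (ev i)) (ev i))"
      unfolding b_def using sum.reindex[of ev B "\<lambda>x. fscale (c x) x"] injev
      by (simp add: inj_on_def inj_def)
    have EB: "b j = (if j \<in> B then c (ev j) else 0)" for j
      unfolding bB by (rule ev_sum[OF finB])
    have aF: "a \<in> F" unfolding a_def
      by (intro subsetD[OF spanAF] vs.span_sum vs.span_scale vs.span_base) 
    have "a i = 0" if "i \<notin> B" for i
    proof -
      have "a i + b i = 0" using S2 by (metis plus_fun_apply zero_fun_def)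
      then show ?thesis using EB[of i] that by simp
    qed
    then have a0: "a = 0" using H aF by blast
    then have b0: "b = 0" using S2 by simp
    show "c v = 0"
    proof (cases "v \<in> A")
      case True
      then show ?thesis using vs.independentD[OF A(3) finA order_refl, of c v] a0 a_def by simp
    next
      case False
      then obtain i where i: "i \<in> B" "v = ev i" using v by blast
      have "b i = 0" using b0 by simp
      then show ?thesis using EB[of i] i by simp
    qed
  qed
  have sp2: "A \<union> ev ` B \<subseteq> vs.span (ev ` {..<N})"
    using Asp BN by (auto intro: vs.span_base)
  have "card (A \<union> ev ` B) \<le> card (ev ` {..<N})"
    using vs.independent_span_bound[OF _ ind sp2] by simp
  also have "\<dots> \<le> N" using card_image_le[of "{..<N}" ev] by simp
  finally have c1: "card (A \<union> ev ` B) \<le> N" .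
  have "card (A \<union> ev ` B) = card A + card (ev ` B)"
    by (rule card_Un_disjoint[OF finA _ disj]) (simp add: finB)
  also have "card (ev ` B) = card B" using injev by (simp add: card_image inj_on_def inj_def)
  finally show False using D A(4) c1 by simp
qed

lemma lp_norm_scale:
  assumes "p \<ge> 1" "c > 0"
  shows "lp_norm p N (fscale c x) = c * lp_norm p N x"
proof -
  have "(\<Sum>i<N. \<bar>fscale c x i\<bar> powr p) = c powr p * (\<Sum>i<N. \<bar>x i\<bar> powr p)"
    using assms by (simp add: fscale_def abs_mult powr_mult sum_distrib_left)
  then have "lp_norm p N (fscale c x) = (c powr p) powr (1/p) * (\<Sum>i<N. \<bar>x i\<bar> powr p) powr (1/p)"
    unfolding lp_norm_def using assms by (simp add: powr_mult sum_nonneg)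
  also have "(c powr p) powr (1/p) = c" using assms by (simp add: powr_powr)
  finally show ?thesis by (simp add: lp_norm_def)
qed

lemma lp_norm_pos:
  assumes "p \<ge> 1" "x \<in> vecs N" "x \<noteq> 0"
  shows "lp_norm p N x > 0"
proof -
  obtain i where i: "x i \<noteq> 0" using assms(3) by (auto simp: fun_eq_iff)
  then have iN: "i < N" using assms(2) by (auto simp: vecs_def) (meson not_le)
  have "0 < \<bar>x i\<bar> powr p" using i by simp
  also have "\<dots> \<le> (\<Sum>i<N. \<bar>x i\<bar> powr p)"
    using iN by (intro member_le_sum) auto
  finally show ?thesis unfolding lp_norm_def by simp
qed

lemma lp_norm_nonneg: "lp_norm p N x \<ge> 0"
  by (simp add: lp_norm_def)

lemma lp_norm_zero: "lp_norm p N 0 = 0"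
  by (simp add: lp_norm_def)

lemma block_disj:
  fixes K :: nat
  assumes "1 \<le> i" "1 \<le> j" "(i-1)*K \<le> m" "m < i*K" "(j-1)*K \<le> m" "m < j*K"
  shows "i = j"
proof -
  have "(i-1)*K < j*K" using assms by linarith
  then have "i-1 < j" by (simp add: mult_less_cancel2)
  moreover have "(j-1)*K < i*K" using assms by linarith
  then have "j-1 < i" by (simp add: mult_less_cancel2)
  ultimately show ?thesis using assms by linarith
qed

theorem lemmaV2:
  fixes p \<epsilon> :: real and k l :: nat
  assumes "p \<ge> 1" and "\<epsilon> > 0" and "k \<ge> 1" and "l \<ge> 1"
  shows "\<exists>N::nat. N \<ge> 1 \<and>
    (\<forall>F. F \<subseteq> vecs N \<and> module.subspace fscale F \<and>
         int (vector_space.dim fscale F) \<ge> int N - int k \<longrightarrow>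
      (\<exists>y :: nat \<Rightarrow> nat \<Rightarrow> real.
         (\<forall>j\<in>{1..l}. y j \<in> vecs N \<and> lp_norm p N (y j) = 1 \<and> lp_dist p N (y j) F \<le> \<epsilon>) \<and>
         (\<forall>i\<in>{1..l}. \<forall>j\<in>{1..l}. i \<noteq> j \<longrightarrow> supp N (y i) \<inter> supp N (y j) = {})))"
proof (rule exI, intro conjI allI impI)
  interpret vs: vector_space fscale by (rule vector_space_fscale)
  define K where "K = k + 1"
  define N where "N = l * K"
  show "N \<ge> 1" using assms by (simp add: N_def K_def)
  fix F assume F: "F \<subseteq> vecs N \<and> module.subspace fscale F \<and>
         int (vector_space.dim fscale F) \<ge> int N - int k"
  define blk where "blk j = {(j-1)*K..<j*K}" for j
  have ex: "\<exists>x\<in>F. x \<noteq> 0 \<and> (\<forall>i. i \<notin> blk j \<longrightarrow> x i = 0)" if j: "j \<in> {1..l}" for j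
  proof (rule key)
    show "F \<subseteq> vecs N" "module.subspace fscale F" using F by auto
    have jl: "j * K \<le> l * K" using j by simp
    show "blk j \<subseteq> {..<N}" unfolding blk_def N_def lessThan_def
      using jl by (auto intro: less_le_trans[OF _ jl])
    have "card (blk j) = K" unfolding blk_def using j
      by (simp add: diff_mult_distrib)
    then show "N < vector_space.dim fscale F + card (blk j)" using F by (simp add: K_def)
  qed
  have "\<forall>j\<in>{1..l}. \<exists>x. x \<in> F \<and> x \<noteq> 0 \<and> (\<forall>i. i \<notin> blk j \<longrightarrow> x i = 0)"
    using ex by blast
  from bchoice[OF this] obtain x where
    x0: "\<forall>j\<in>{1..l}. x j \<in> F \<and> x j \<noteq> 0 \<and> (\<forall>i. i \<notin> blk j \<longrightarrow> x j i = 0)" by blast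
  have x: "x j \<in> F \<and> x j \<noteq> 0 \<and> (\<forall>i. i \<notin> blk j \<longrightarrow> x j i = 0)" if "j \<in> {1..l}" for j
    using x0 that by blast
  define y where "y j = fscale (1 / lp_norm p N (x j)) (x j)" for j
  show "\<exists>y :: nat \<Rightarrow> nat \<Rightarrow> real.
         (\<forall>j\<in>{1..l}. y j \<in> vecs N \<and> lp_norm p N (y j) = 1 \<and> lp_dist p N (y j) F \<le> \<epsilon>) \<and>
         (\<forall>i\<in>{1..l}. \<forall>j\<in>{1..l}. i \<noteq> j \<longrightarrow> supp N (y i) \<inter> supp N (y j) = {})"
  proof (intro exI[of _ y] conjI ballI impI)
    fix j assume j: "j \<in> {1..l}"
    have xF: "x j \<in> F" and xv: "x j \<in> vecs N" and x0: "x j \<noteq> 0" using x[OF j] F by auto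
    have pos: "lp_norm p N (x j) > 0" using lp_norm_pos[OF assms(1) xv x0] .
    have yF: "y j \<in> F" unfolding y_def using F xF vs.subspace_scale by blast
    then show "y j \<in> vecs N" using F by auto
    show "lp_norm p N (y j) = 1" unfolding y_def using lp_norm_scale[OF assms(1)] pos by simp
    have "lp_dist p N (y j) F \<le> lp_norm p N (y j - y j)"
      unfolding lp_dist_def
      by (rule cINF_lower[OF _ yF]) (auto intro: bdd_belowI[where m=0] simp: lp_norm_nonneg)
    then show "lp_dist p N (y j) F \<le> \<epsilon>" using lp_norm_zero[of p N] assms(2) by simp
  next
    fix i j assume i: "i \<in> {1..l}" and j: "j \<in> {1..l}" and ij: "i \<noteq> j"
    have s: "supp N (y m) \<subseteq> blk m" if "m \<in> {1..l}" for m
      using x[OF that] by (auto simp: supp_def y_def fscale_def)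
    show "supp N (y i) \<inter> supp N (y j) = {}"
    proof (rule ccontr)
      assume "supp N (y i) \<inter> supp N (y j) \<noteq> {}"
      then obtain m where "m \<in> blk i" "m \<in> blk j" using s[OF i] s[OF j] by blast
      then have "i = j" using i j block_disj[of i j K m] by (auto simp: blk_def)
      then show False using ij by simp
    qed
  qed
qed

end
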